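(* Let $C>0$, $c_{1,i}=\frac{\beta_i}{2C}$, $r=\sqrt{u^2+v^2}$, and for $i=1,2$ let $\varphi_{0,i}(u,v,z)=r^{p_i}z^{q_i}$ and $\varphi_{1,i}(u,v,z)=\frac{r^{p_i}z^{q_i}}{(C^{-2}+1)^{\beta_i/2}}\left|\frac{r}{v}\right|^{\beta_i}+c_{1,i}r^{p_i}z^{q_i}\left|\frac{r}{v}\right|^{\beta_i}\int_{u/|v|}^{1/C}(t^2+1)^{\frac{\alpha_i-\beta_i-1}{2}}\,dt.$ Then for all $C=C(h)>0$ sufficiently large, $\left(\partial_u\varphi_{0,i}-\partial_u\varphi_{1,i}\right)\le0$ at every point $(u,v,z)$ with $Cu=|v|$, $v\neq 0$, $0<z\le1$, $i=1,2$.
   Context: Fix $h\in(0,1)$ and $\alpha_h=\frac13+\frac23h$. Constants $p_i,q_i,\alpha_i,\beta_i$ ($i=1,2$) satisfy $p_1>0$, $p_2>0$, $q_1=0$, $q_2>0$, $0<\alpha_hp_i-(1-h)q_i=\beta_i<\alpha_i<1$, $q_2>\frac13p_2+\frac12\alpha_2$, $p_2>p_1$, $p_2+\frac32\alpha_2>p_1+\frac32\alpha_1$. *)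

theory Defs
  imports "HOL-Analysis.Analysis"
begin

definition oint :: "real \<Rightarrow> real \<Rightarrow> (real \<Rightarrow> real) \<Rightarrow> real" where
  "oint a b f = (if a \<le> b then integral {a..b} f else - integral {b..a} f)"

definition phi0 :: "real \<Rightarrow> real \<Rightarrow> real \<Rightarrow> real \<Rightarrow> real \<Rightarrow> real" where
  "phi0 p q u v z = (sqrt (u\<^sup>2 + v\<^sup>2)) powr p * z powr q"

definition phi1 :: "real \<Rightarrow> real \<Rightarrow> real \<Rightarrow> real \<Rightarrow> real \<Rightarrow> real \<Rightarrow> real \<Rightarrow> real \<Rightarrow> real" where
  "phi1 C p q \<alpha> \<beta> u v z =
     (let r = sqrt (u\<^sup>2 + v\<^sup>2); c1 = \<beta> / (2 * C) in
       r powr p * z powr q / ((C powr (-2) + 1) powr (\<beta> / 2)) * \<bar>r / v\<bar> powr \<beta>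
       + c1 * r powr p * z powr q * \<bar>r / v\<bar> powr \<beta>
         * oint (u / \<bar>v\<bar>) (1 / C) (\<lambda>t. (t\<^sup>2 + 1) powr ((\<alpha> - \<beta> - 1) / 2)))"

end

theory Submission
  imports Defs
begin

lemma sqrt_powr: "0 \<le> x \<Longrightarrow> sqrt x powr e = x powr (e/2)"
  by (simp add: powr_half_sqrt[symmetric] powr_powr)

definition ff :: "real \<Rightarrow> real \<Rightarrow> real" where
  "ff e t = (t\<^sup>2 + 1) powr e"

definition GG :: "real \<Rightarrow> real \<Rightarrow> real" where
  "GG e x = integral {0..x} (ff e)"

lemma ff_cont: "continuous_on S (ff e)"
proof -
  have "continuous_on S (\<lambda>t::real. (t\<^sup>2 + 1) powr e)"
    using continuous_on_powr'[of S "\<lambda>t::real. t\<^sup>2 + 1" "\<lambda>_. e"]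
    by (auto intro!: continuous_intros simp: add_pos_nonneg) (smt (verit) zero_le_power2)
  then show ?thesis by (simp add: ff_def[abs_def])
qed

lemma GG_deriv: assumes "x > 0" shows "(GG e has_real_derivative ff e x) (at x)"
proof -
  have D: "((\<lambda>y. integral {0..y} (ff e)) has_real_derivative ff e x) (at x within {0..x+1})"
    by (rule integral_has_real_derivative) (use assms ff_cont in auto)
  have "x \<in> interior {0..x+1}" using assms by simp
  then have atw: "at x within {0..x+1} = at x" by (rule at_within_interior)
  have eq: "GG e = (\<lambda>y. integral {0..y} (ff e))" by (rule ext) (simp add: GG_def)
  show ?thesis using D by (simp only: eq atw)
qed

lemma oint_GG: assumes "0 \<le> x" "0 \<le> b"
  shows "oint x b (\<lambda>t. (t\<^sup>2 + 1) powr e) = GG e b - GG e x"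
proof -
  have fe: "(\<lambda>t. (t\<^sup>2 + 1) powr e) = ff e" by (auto simp: ff_def)
  have int: "\<And>m. ff e integrable_on {0..m}" by (rule integrable_continuous_interval[OF ff_cont])
  show ?thesis
  proof (cases "x \<le> b")
    case True
    have "integral {0..x} (ff e) + integral {x..b} (ff e) = integral {0..b} (ff e)"
      by (rule Henstock_Kurzweil_Integration.integral_combine) (use assms True int in auto)
    then show ?thesis using True unfolding oint_def fe GG_def by simp
  next
    case False
    have "integral {0..b} (ff e) + integral {b..x} (ff e) = integral {0..x} (ff e)"
      by (rule Henstock_Kurzweil_Integration.integral_combine) (use assms False int in auto)
    then show ?thesis using False unfolding oint_def fe GG_def by simp
  qed
qed


lemma pw3: "(w::real)>0 \<Longrightarrow> w powr x * w * w powr y = w powr (x+1+y)"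
  by (simp add: powr_add)
lemma pw3': "(w::real)>0 \<Longrightarrow> w powr x * w\<^sup>2 * w powr y = w powr (x+2+y)"
  by (simp add: powr_add powr_numeral)
lemma l3: "(a::real) > 0 \<Longrightarrow> a powr (P-2) * a\<^sup>2 * a powr B = a powr (P+B)"
proof -
  assume a: "a > 0"
  have e: "P+B = (P-2)+2+B" by simp
  show ?thesis by (subst e, rule pw3'[OF a])
qed
lemma l4: "(w::real) > 0 \<Longrightarrow> w powr (P/2-1) * w * w powr (B/2) = w powr ((P+B)/2)"
proof -
  assume a: "w > 0"
  have e: "(P+B)/2 = (P/2-1)+1+B/2" by simp
  show ?thesis by (subst e, rule pw3[OF a])
qed
lemma l5: "(w::real) > 0 \<Longrightarrow> w powr (B/2) * w * w powr ((A - B - 1) / 2) = w powr ((A+1)/2)"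
proof -
  assume a: "w > 0"
  have e: "(A+1)/2 = B/2+1+(A - B - 1) / 2" by (simp add: field_simps)
  show ?thesis by (subst e, rule pw3[OF a])
qed
lemma l2: "(a::real) > 0 \<Longrightarrow> w > 0 \<Longrightarrow>
  a powr (2*(((P+B)/2-1))) * w powr ((P+B)/2-1) = a powr (P-2) * a powr B * w powr (P/2-1) * w powr (B/2)"
  by (simp add: powr_add[symmetric] algebra_simps add_divide_distrib diff_divide_distrib)
lemma l1: "(a::real) > 0 \<Longrightarrow> (a\<^sup>2) powr x = a powr (2*x)"
  by (simp add: powr_powr[symmetric] powr_numeral)
lemma Cm2: "(C::real) \<ge> 1 \<Longrightarrow> C powr (-2) = 1/C^2"
  by (simp add: powr_minus powr_numeral divide_inverse)

lemma key:
  fixes C P Q A B u v z :: real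
  assumes C: "C \<ge> 1" and cu: "C*u = \<bar>v\<bar>" and v: "v \<noteq> 0" and z: "0 < z"
    and B: "0 < B" "B < A" "A < 1"
  shows "deriv (\<lambda>u'. phi0 P Q u' v z) u - deriv (\<lambda>u'. phi1 C P Q A B u' v z) u \<le> 0"
proof -
  define a where "a = \<bar>v\<bar>"
  have a: "a > 0" using v by (simp add: a_def)
  have va: "v\<^sup>2 = a\<^sup>2" by (simp add: a_def)
  have u: "u = a / C" using cu C by (simp add: a_def field_simps)
  have upos: "u > 0" using u a C by simp
  define e where "e = (A - B - 1) / 2"
  define K where "K = (C powr (-2) + 1) powr (B/2)"
  have Kpos: "K > 0" unfolding K_def by (smt (verit) powr_gt_zero powr_ge_zero)
  define c1 where "c1 = B / (2*C)"
  define g where "g = (\<lambda>u'. GG e (1/C) - GG e (u'/a))"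
  have spos: "\<And>x. x\<^sup>2 + v\<^sup>2 > 0" using v by (simp add: add_nonneg_pos)
  have phi0_eq: "(\<lambda>u'. phi0 P Q u' v z) = (\<lambda>u'. (u'\<^sup>2+v\<^sup>2) powr (P/2) * z powr Q)"
    using spos by (auto simp: phi0_def sqrt_powr less_imp_le)
  have D0: "((\<lambda>u'. (u'\<^sup>2+v\<^sup>2) powr (P/2) * z powr Q) has_real_derivative
       (P/2 * (u\<^sup>2+v\<^sup>2) powr (P/2-1) * (2*u)) * z powr Q) (at u)"
    using spos[of u]
    by (auto intro!: derivative_eq_intros simp: powr_diff field_simps)
  have phi1_eq: "phi1 C P Q A B x v z = z powr Q / a powr B * ((x\<^sup>2+v\<^sup>2) powr ((P+B)/2) * (1/K + c1 * g x))"
    if x: "x > 0" for x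
  proof -
    define r where "r = sqrt (x\<^sup>2 + v\<^sup>2)"
    have r: "r > 0" using spos[of x] by (simp add: r_def)
    have o: "oint (x / \<bar>v\<bar>) (1 / C) (\<lambda>t. (t\<^sup>2 + 1) powr ((A - B - 1) / 2)) = g x"
      unfolding g_def e_def a_def by (rule oint_GG) (use x C in auto)
    have ab: "\<bar>r / v\<bar> powr B = r powr B / a powr B"
      using r a by (simp add: a_def abs_div powr_divide)
    have rr: "r powr P * r powr B = (x\<^sup>2+v\<^sup>2) powr ((P+B)/2)"
      unfolding r_def by (simp add: powr_add[symmetric] sqrt_powr less_imp_le spos add_divide_distrib)
    have "phi1 C P Q A B x v z = r powr P * z powr Q / K * \<bar>r / v\<bar> powr B
       + c1 * r powr P * z powr Q * \<bar>r / v\<bar> powr B * g x"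
      unfolding phi1_def Let_def r_def[symmetric] o K_def c1_def by simp
    also have "\<dots> = z powr Q / a powr B * ((r powr P * r powr B) * (1/K + c1 * g x))"
      unfolding ab using Kpos a by (simp add: field_simps)
    finally show ?thesis unfolding rr .
  qed
  have Dg: "(g has_real_derivative - (ff e (u/a) * (1/a))) (at u)"
  proof -
    have "((\<lambda>x. GG e (x/a)) has_real_derivative ff e (u/a) * (1/a)) (at u)"
      by (rule DERIV_chain2[OF GG_deriv]) (use upos a in \<open>auto intro!: derivative_eq_intros\<close>)
    then show ?thesis unfolding g_def by (auto intro!: derivative_eq_intros)
  qed
  have Hd: "((\<lambda>x. (x\<^sup>2+v\<^sup>2) powr ((P+B)/2)) has_real_derivative
       (P+B)/2 * (u\<^sup>2+v\<^sup>2) powr ((P+B)/2-1) * (2*u)) (at u)"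
    using spos[of u]
    by (auto intro!: derivative_eq_intros simp: powr_diff field_simps)
  have D1: "((\<lambda>x. z powr Q / a powr B * ((x\<^sup>2+v\<^sup>2) powr ((P+B)/2) * (1/K + c1 * g x)))
     has_real_derivative z powr Q / a powr B * ((P+B)/2 * (u\<^sup>2+v\<^sup>2) powr ((P+B)/2-1) * (2*u) * (1/K + c1 * g u)
        + (0 + c1 * - (ff e (u/a) * (1/a))) * (u\<^sup>2+v\<^sup>2) powr ((P+B)/2))) (at u)"
    by (intro DERIV_cmult DERIV_mult DERIV_add DERIV_const Hd Dg)
  have d0: "deriv (\<lambda>u'. phi0 P Q u' v z) u = (P/2 * (u\<^sup>2+v\<^sup>2) powr (P/2-1) * (2*u)) * z powr Q"
    unfolding phi0_eq by (rule DERIV_imp_deriv[OF D0])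
  have d1: "deriv (\<lambda>u'. phi1 C P Q A B u' v z) u = z powr Q / a powr B * ((P+B)/2 * (u\<^sup>2+v\<^sup>2) powr ((P+B)/2-1) * (2*u) * (1/K + c1 * g u)
        + (0 + c1 * - (ff e (u/a) * (1/a))) * (u\<^sup>2+v\<^sup>2) powr ((P+B)/2))"
    by (rule DERIV_imp_deriv[OF has_field_derivative_transform_within_open[OF D1, of "{0<..}"]])
      (use upos phi1_eq in auto)
  define w where "w = 1 + 1 / C\<^sup>2"
  have w1: "w \<ge> 1" and w2: "w \<le> 2" using C by (auto simp: w_def)
  have wpos: "w > 0" using w1 by simp
  have Kw: "K = w powr (B/2)"
    unfolding K_def w_def using C by (simp add: Cm2 add.commute)
  have gu: "g u = 0" unfolding g_def u using a C by simp
  have fu: "ff e (u/a) = w powr e"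
    unfolding ff_def w_def u using a C by (simp add: power_divide add.commute)
  have s: "u\<^sup>2 + v\<^sup>2 = a\<^sup>2 * w" unfolding va u w_def using C by (simp add: field_simps power_divide)
  have sp: "(u\<^sup>2 + v\<^sup>2) powr x = a powr (2*x) * w powr x" for x
  proof -
    have "(a\<^sup>2 * w) powr x = (a\<^sup>2) powr x * w powr x" using a wpos by (simp add: powr_mult)
    also have "(a\<^sup>2) powr x = a powr (2*x)" using a l1 by blast
    finally show ?thesis using s by simp
  qed
  define X where "X = a powr (P-2)"
  define Y where "Y = w powr (P/2-1)"
  define M where "M = w powr ((A+1)/2)"
  define aB where "aB = a powr B"
  have S0: "(u\<^sup>2 + v\<^sup>2) powr (P/2-1) = X * Y" unfolding sp X_def Y_def by simp
  have S1: "(u\<^sup>2 + v\<^sup>2) powr ((P+B)/2-1) = X * aB * Y * K"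
    unfolding sp X_def Y_def aB_def Kw by (rule l2[OF a wpos])
  have H: "(u\<^sup>2 + v\<^sup>2) powr ((P+B)/2) = X * a\<^sup>2 * aB * Y * w * K"
  proof -
    have h1: "X * a\<^sup>2 * aB = a powr (P+B)" unfolding X_def aB_def using l3[OF a] .
    have h2: "Y * w * K = w powr ((P+B)/2)" unfolding Y_def Kw using l4[OF wpos] .
    have e2: "2*((P+B)/2) = P+B" by simp
    have "(u\<^sup>2 + v\<^sup>2) powr ((P+B)/2) = a powr (P+B) * w powr ((P+B)/2)" unfolding sp by (simp only: e2)
    also have "\<dots> = (X * a\<^sup>2 * aB) * (Y * w * K)" by (simp only: h1 h2)
    finally show ?thesis by (simp only: mult.assoc)
  qed
  have KM: "K * w * w powr e = M" unfolding Kw M_def e_def using l5[OF wpos] .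
  have aBpos: "aB > 0" unfolding aB_def using a by simp
  have diff: "deriv (\<lambda>u'. phi0 P Q u' v z) u - deriv (\<lambda>u'. phi1 C P Q A B u' v z) u
      = z powr Q * X * Y * (B * a / C) * (M / 2 - 1)"
  proof -
    have "deriv (\<lambda>u'. phi0 P Q u' v z) u - deriv (\<lambda>u'. phi1 C P Q A B u' v z) u
      = z powr Q * X * Y * (- B * u + a * c1 * (K * w * w powr e))"
      unfolding d0 d1 S0 S1 H gu fu using aBpos Kpos a by (simp add: aB_def field_simps power2_eq_square)
    then show ?thesis unfolding KM c1_def u using C by (simp add: field_simps)
  qed
  have M2: "M \<le> 2"
  proof -
    have "M \<le> w powr 1" unfolding M_def by (rule powr_mono) (use B w1 in auto)
    then show ?thesis using w2 wpos by simp
  qed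
  have "z powr Q * X * Y * (B * a / C) \<ge> 0"
    unfolding X_def Y_def using z a B C by simp
  then have "z powr Q * X * Y * (B * a / C) * (M / 2 - 1) \<le> 0"
    by (rule mult_nonneg_nonpos) (use M2 in simp)
  then show ?thesis unfolding diff .
qed


theorem lemma7p1:
  fixes h :: real and p q \<alpha> \<beta> :: "nat \<Rightarrow> real"
  assumes h: "0 < h" "h < 1"
    and p_pos: "p 1 > 0" "p 2 > 0"
    and q: "q 1 = 0" "q 2 > 0"
    and \<beta>_def: "\<And>i. i \<in> {1, 2} \<Longrightarrow> \<beta> i = (1/3 + 2/3 * h) * p i - (1 - h) * q i"
    and \<beta>_bounds: "\<And>i. i \<in> {1, 2} \<Longrightarrow> 0 < \<beta> i \<and> \<beta> i < \<alpha> i \<and> \<alpha> i < 1"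
    and q2: "q 2 > 1/3 * p 2 + 1/2 * \<alpha> 2"
    and p21: "p 2 > p 1"
    and p\<alpha>: "p 2 + 3/2 * \<alpha> 2 > p 1 + 3/2 * \<alpha> 1"
  shows "\<exists>C0>0. \<forall>C\<ge>C0. \<forall>u v z. \<forall>i\<in>{1::nat, 2}.
           C * u = \<bar>v\<bar> \<and> v \<noteq> 0 \<and> 0 < z \<and> z \<le> 1 \<longrightarrow>
           deriv (\<lambda>u'. phi0 (p i) (q i) u' v z) u
             - deriv (\<lambda>u'. phi1 C (p i) (q i) (\<alpha> i) (\<beta> i) u' v z) u \<le> 0"
proof (intro exI[of _ 1] conjI allI impI ballI)
  fix C u v z :: real and i :: nat
  assume C: "1 \<le> C" and i: "i \<in> {1, 2}"
    and H: "C * u = \<bar>v\<bar> \<and> v \<noteq> 0 \<and> 0 < z \<and> z \<le> 1"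
  have b: "0 < \<beta> i" "\<beta> i < \<alpha> i" "\<alpha> i < 1" using \<beta>_bounds[OF i] by auto
  show "deriv (\<lambda>u'. phi0 (p i) (q i) u' v z) u
             - deriv (\<lambda>u'. phi1 C (p i) (q i) (\<alpha> i) (\<beta> i) u' v z) u \<le> 0"
    using key[where C=C and u=u and v=v and z=z and A="\<alpha> i" and B="\<beta> i" and P="p i" and Q="q i"]
      C H b by blast
qed simp

end
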